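(* For every $n\geq1$, $$\sum_{\sigma\in\mathfrak S_{n+1}}(-1)^{{\rm des}(\sigma)}\Bigl(\frac{\beta}{2}\Bigr)^{{\rm LRmin}(\sigma)+{\rm RLmin}(\sigma)-2}=\begin{cases}(-1)^{\frac n2}\displaystyle\sum_{\sigma\in\mathfrak S^{d}_n}\beta^{{\rm RLmin}(\sigma)},& n\text{ even},\\ 0,& n\text{ odd},\end{cases}$$ where $\mathfrak S^d_n$ is the set of down-up permutations of $[n]$.
   Context: For $\sigma=\sigma_1\cdots\sigma_m\in\mathfrak S_m$: ${\rm des}(\sigma)$ is the number of $i\in[m-1]$ with $\sigma_i>\sigma_{i+1}$; ${\rm LRmin}(\sigma)$ is the number of $i$ with $\sigma_j>\sigma_i$ for all $j<i$; ${\rm RLmin}(\sigma)$ is the number of $i$ with $\sigma_j>\sigma_i$ for all $j>i$. A permutation is down-up if $\sigma_1>\sigma_2<\sigma_3>\sigma_4<\cdots$. *)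

theory Defs
  imports "HOL-Analysis.Analysis" "HOL-Combinatorics.Multiset_Permutations"
begin

text \<open>Permutations of [m] are represented as lists (one-line notation)
  in permutations_of_set {1..m}; positions are 0-indexed.\<close>

definition des :: "nat list \<Rightarrow> nat" where
  "des s = card {i. i + 1 < length s \<and> s ! i > s ! (i + 1)}"

definition LRmin :: "nat list \<Rightarrow> nat" where
  "LRmin s = card {i. i < length s \<and> (\<forall>j<i. s ! j > s ! i)}"

definition RLmin :: "nat list \<Rightarrow> nat" where
  "RLmin s = card {i. i < length s \<and> (\<forall>j. i < j \<and> j < length s \<longrightarrow> s ! j > s ! i)}"

text \<open>Down-up: s1 > s2 < s3 > s4 < ... ; with 0-indexing, for every adjacent pair
  (i, i+1), s!i > s!(i+1) iff i is even.\<close>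
definition down_up :: "nat list \<Rightarrow> bool" where
  "down_up s = (\<forall>i. i + 1 < length s \<longrightarrow> (s ! i > s ! (i + 1) \<longleftrightarrow> even i))"

end

theory Submission
  imports Defs "HOL-Computational_Algebra.Formal_Power_Series"
begin


lemma des_Nil[simp]: "des [] = 0" by (simp add: des_def)

lemma des_Cons: "des (a # xs) = des xs + (if xs \<noteq> [] \<and> a > hd xs then 1 else 0)"
proof -
  have "{i. i + 1 < length (a#xs) \<and> (a#xs) ! i > (a#xs) ! (i + 1)}
      = (if xs \<noteq> [] \<and> a > hd xs then {0} else {}) \<union> Suc ` {i. i + 1 < length xs \<and> xs ! i > xs ! (i + 1)}"
    (is "?L = ?R")
  proof (rule set_eqI)
    fix i show "i \<in> ?L \<longleftrightarrow> i \<in> ?R"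
      by (cases i) (auto simp: hd_conv_nth)
  qed
  moreover have "finite {i. i + 1 < length xs \<and> xs ! i > xs ! (i + 1)}"
    by (rule finite_subset[of _ "{..<length xs}"]) auto
  then have "card ?R = (if xs \<noteq> [] \<and> a > hd xs then 1 else 0) + des xs"
    by (auto simp: des_def card_image)
  ultimately show ?thesis by (simp add: des_def)
qed

lemma all_Suc_shift: "(\<forall>j. m < j \<and> j < Suc n \<longrightarrow> Q j) \<longleftrightarrow> (\<forall>k. m \<le> k \<and> k < n \<longrightarrow> Q (Suc k))"
proof
  assume h: "\<forall>j. m < j \<and> j < Suc n \<longrightarrow> Q j"
  show "\<forall>k. m \<le> k \<and> k < n \<longrightarrow> Q (Suc k)"
  proof (intro allI impI)
    fix k assume "m \<le> k \<and> k < n" then show "Q (Suc k)" using h[rule_format, of "Suc k"] by simp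
  qed
next
  assume h: "\<forall>k. m \<le> k \<and> k < n \<longrightarrow> Q (Suc k)"
  show "\<forall>j. m < j \<and> j < Suc n \<longrightarrow> Q j"
  proof (intro allI impI)
    fix j assume j: "m < j \<and> j < Suc n"
    then obtain k where k: "j = Suc k" by (cases j) auto
    show "Q j" using h[rule_format, of k] j k by simp
  qed
qed

lemma RLmin_Nil[simp]: "RLmin [] = 0" by (simp add: RLmin_def)

lemma RLmin_Cons: "RLmin (a # xs) = RLmin xs + (if \<forall>y\<in>set xs. y > a then 1 else 0)"
proof -
  have "{i. i < length (a#xs) \<and> (\<forall>j. i < j \<and> j < length (a#xs) \<longrightarrow> (a#xs) ! j > (a#xs) ! i)}
      = (if \<forall>y\<in>set xs. y > a then {0} else {}) \<union> Suc ` {i. i < length xs \<and> (\<forall>j. i < j \<and> j < length xs \<longrightarrow> xs ! j > xs ! i)}"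
    (is "?L = ?R")
  proof (rule set_eqI)
    fix i show "i \<in> ?L \<longleftrightarrow> i \<in> ?R"
    proof (cases i)
      case 0
      have "(\<forall>j. 0 < j \<and> j < Suc (length xs) \<longrightarrow> (a#xs) ! j > a) \<longleftrightarrow> (\<forall>y\<in>set xs. y > a)"
        unfolding all_Suc_shift by (auto simp: all_set_conv_all_nth)
      then show ?thesis using 0 by auto
    next
      case (Suc k)
      have "(\<forall>j. Suc k < j \<and> j < Suc (length xs) \<longrightarrow> (a#xs) ! j > xs ! k) \<longleftrightarrow>
            (\<forall>j. k < j \<and> j < length xs \<longrightarrow> xs ! j > xs ! k)"
        unfolding all_Suc_shift[of "Suc k"] by (auto simp: Suc_le_eq)
      then show ?thesis using Suc by auto
    qed
  qed
  moreover have "finite {i. i < length xs \<and> (\<forall>j. i < j \<and> j < length xs \<longrightarrow> xs ! j > xs ! i)}"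
    by (rule finite_subset[of _ "{..<length xs}"]) auto
  then have "card ?R = (if \<forall>y\<in>set xs. y > a then 1 else 0) + RLmin xs"
    by (auto simp: RLmin_def card_image)
  ultimately show ?thesis by (simp add: RLmin_def)
qed

lemma LRmin_rev: "LRmin s = RLmin (rev s)"
proof -
  let ?n = "length s"
  have "{i. i < length (rev s) \<and> (\<forall>j. i < j \<and> j < length (rev s) \<longrightarrow> rev s ! j > rev s ! i)}
        = (\<lambda>i. ?n - 1 - i) ` {i. i < ?n \<and> (\<forall>j<i. s ! j > s ! i)}" (is "?L = ?R")
  proof (rule set_eqI)
    fix i
    show "i \<in> ?L \<longleftrightarrow> i \<in> ?R"
    proof
      assume "i \<in> ?L"
      then have i: "i < ?n" and h: "\<forall>j. i < j \<and> j < ?n \<longrightarrow> rev s ! j > rev s ! i" by auto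
      have "?n - 1 - i \<in> {i. i < ?n \<and> (\<forall>j<i. s ! j > s ! i)}"
      proof (safe)
        show "?n - 1 - i < ?n" using i by simp
        fix j assume j: "j < ?n - 1 - i"
        have "i < ?n - 1 - j \<and> ?n - 1 - j < ?n" using j i by arith
        with h have "rev s ! (?n - 1 - j) > rev s ! i" by blast
        moreover have "rev s ! (?n - 1 - j) = s ! j" using j i by (simp add: rev_nth)
        moreover have "rev s ! i = s ! (?n - 1 - i)" using i by (simp add: rev_nth)
        ultimately show "s ! j > s ! (?n - 1 - i)" by simp
      qed
      moreover have "i = ?n - 1 - (?n - 1 - i)" using i by simp
      ultimately show "i \<in> ?R" by blast
    next
      assume "i \<in> ?R"
      then obtain k where k: "k < ?n" "\<forall>j<k. s ! j > s ! k" and i: "i = ?n - 1 - k" by auto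
      show "i \<in> ?L"
      proof (safe)
        show "i < length (rev s)" using k i by simp
        fix j assume j: "i < j" "j < length (rev s)"
        have "s ! (?n - 1 - j) > s ! k" using k j i by auto
        moreover have "rev s ! j = s ! (?n - 1 - j)" using j by (simp add: rev_nth)
        moreover have "rev s ! i = s ! k" using k i by (simp add: rev_nth)
        ultimately show "rev s ! j > rev s ! i" by simp
      qed
    qed
  qed
  note eq = this
  have inj: "inj_on (\<lambda>i. ?n - 1 - i) {i. i < ?n \<and> (\<forall>j<i. s ! j > s ! i)}"
    by (rule inj_onI) auto
  have "RLmin (rev s) = card ?L" unfolding RLmin_def by (rule refl)
  also have "\<dots> = card ?R" by (rule arg_cong[OF eq])
  also have "\<dots> = card {i. i < ?n \<and> (\<forall>j<i. s ! j > s ! i)}" by (rule card_image[OF inj])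
  also have "\<dots> = LRmin s" unfolding LRmin_def by (rule refl)
  finally show ?thesis by (rule sym)
qed

lemma RLmin_split:
  assumes "\<forall>y\<in>set al. y > m" "\<forall>y\<in>set ga. y > m"
  shows "RLmin (al @ m # ga) = RLmin ga + 1"
  using assms(1)
proof (induction al)
  case Nil then show ?case using assms(2) by (simp add: RLmin_Cons)
next
  case (Cons a al)
  then show ?case by (auto simp: RLmin_Cons)
qed

lemma LRmin_split:
  assumes "\<forall>y\<in>set al. y > m" "\<forall>y\<in>set ga. y > m"
  shows "LRmin (al @ m # ga) = LRmin al + 1"
proof -
  have r: "rev (al @ m # ga) = rev ga @ m # rev al" by simp
  have "LRmin (al @ m # ga) = RLmin (rev ga @ m # rev al)" unfolding r[symmetric] by (rule LRmin_rev)
  also have "\<dots> = RLmin (rev al) + 1" by (rule RLmin_split) (use assms in auto)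
  finally show ?thesis using LRmin_rev[of al] by simp
qed

lemma des_split:
  assumes "\<forall>y\<in>set al. y > m" "\<forall>y\<in>set ga. y > m"
  shows "des (al @ m # ga) = des al + des ga + (if al = [] then 0 else 1)"
  using assms(1)
proof (induction al)
  case Nil then show ?case using assms(2) by (cases ga) (auto simp: des_Cons)
next
  case (Cons a al)
  have am: "a > m" and al: "\<forall>y\<in>set al. y > m" using Cons.prems by auto
  have IH: "des (al @ m # ga) = des al + des ga + (if al = [] then 0 else 1)" using Cons.IH al by blast
  have e: "des ((a # al) @ m # ga) = des (al @ m # ga) + (if a > hd (al @ m # ga) then 1 else 0)"
    by (simp add: des_Cons)
  show ?case
  proof (cases al)
    case Nil then show ?thesis using e IH am by (simp add: des_Cons)
  next
    case (Cons c cs) then show ?thesis using e IH by (simp add: des_Cons)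
  qed
qed

definition alt :: "bool \<Rightarrow> nat list \<Rightarrow> bool" where
  "alt b s = (\<forall>i. i + 1 < length s \<longrightarrow> (s ! i > s ! (i + 1) \<longleftrightarrow> (even i = b)))"

lemma alt_Nil[simp]: "alt b []" by (simp add: alt_def)

lemma alt_Cons: "alt b (a # xs) \<longleftrightarrow> alt (\<not> b) xs \<and> (xs \<noteq> [] \<longrightarrow> (a > hd xs \<longleftrightarrow> b))"
proof
  assume h: "alt b (a # xs)"
  have "alt (\<not> b) xs"
    unfolding alt_def
  proof (intro allI impI)
    fix i assume "i + 1 < length xs"
    then show "(xs ! i > xs ! (i + 1) \<longleftrightarrow> (even i = (\<not> b)))"
      using h[unfolded alt_def, rule_format, of "Suc i"] by auto
  qed
  moreover have "xs \<noteq> [] \<longrightarrow> (a > hd xs \<longleftrightarrow> b)"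
    using h[unfolded alt_def, rule_format, of 0] by (cases xs) auto
  ultimately show "alt (\<not> b) xs \<and> (xs \<noteq> [] \<longrightarrow> (a > hd xs \<longleftrightarrow> b))" by blast
next
  assume h: "alt (\<not> b) xs \<and> (xs \<noteq> [] \<longrightarrow> (a > hd xs \<longleftrightarrow> b))"
  show "alt b (a # xs)"
    unfolding alt_def
  proof (intro allI impI)
    fix i assume i: "i + 1 < length (a # xs)"
    show "((a # xs) ! i > (a # xs) ! (i + 1) \<longleftrightarrow> (even i = b))"
    proof (cases i)
      case 0 then show ?thesis using h i by (cases xs) auto
    next
      case (Suc k) then show ?thesis using h[THEN conjunct1, unfolded alt_def, rule_format, of k] i by auto
    qed
  qed
qed

lemma down_up_alt: "down_up s = alt True s"
  by (simp add: down_up_def alt_def)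

lemma alt_split:
  assumes "\<forall>y\<in>set al. y > m" "\<forall>y\<in>set ga. y > m"
  shows "alt b (al @ m # ga) \<longleftrightarrow>
    (if al = [] then alt (\<not> b) ga \<and> (ga \<noteq> [] \<longrightarrow> \<not> b)
     else alt b al \<and> odd (length al) = b \<and> alt (if odd (length al) then b else \<not> b) ga)"
  using assms(1)
proof (induction al arbitrary: b)
  case Nil
  have hg: "ga \<noteq> [] \<Longrightarrow> \<not> m > hd ga"
  proof -
    assume "ga \<noteq> []"
    then have "hd ga \<in> set ga" by simp
    with assms(2) have "hd ga > m" by blast
    then show "\<not> m > hd ga" by simp
  qed
  have "alt b (m # ga) \<longleftrightarrow> alt (\<not>b) ga \<and> (ga \<noteq> [] \<longrightarrow> (m > hd ga \<longleftrightarrow> b))" by (rule alt_Cons)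
  then show ?case using hg by auto
next
  case (Cons a al)
  note IH = Cons.IH[of "\<not>b"]
  have hg: "ga \<noteq> [] \<Longrightarrow> hd ga > m"
  proof -
    assume "ga \<noteq> []"
    then have "hd ga \<in> set ga" by simp
    with assms(2) show "hd ga > m" by blast
  qed
  have am: "a > m" using Cons.prems by simp
  have al: "\<forall>y\<in>set al. y > m" using Cons.prems by simp
  have e1: "alt b ((a#al) @ m # ga) \<longleftrightarrow> alt (\<not>b) (al @ m # ga) \<and> (a > hd (al @ m # ga) \<longleftrightarrow> b)"
    by (simp add: alt_Cons)
  show ?case
  proof (cases al)
    case Nil
    have e2: "alt (\<not>b) (m # ga) \<longleftrightarrow> alt b ga \<and> (ga \<noteq> [] \<longrightarrow> b)"
      using hg alt_Cons[of "\<not>b" m ga] by auto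
    have a1: "alt b [a]" by (simp add: alt_def)
    have "alt b ((a#al) @ m # ga) \<longleftrightarrow> alt (\<not>b) (m # ga) \<and> b" using e1 am Nil by simp
    also have "\<dots> \<longleftrightarrow> alt b ga \<and> b" using e2 by blast
    finally have "alt b ((a#al) @ m # ga) \<longleftrightarrow> alt b ga \<and> b" .
    then show ?thesis using a1 Nil by auto
  next
    case (Cons c cs)
    have e3: "alt b (a # al) \<longleftrightarrow> alt (\<not>b) al \<and> (a > c \<longleftrightarrow> b)" using Cons alt_Cons[of b a al] by simp
    have IH': "alt (\<not>b) (al @ m # ga) \<longleftrightarrow> alt (\<not>b) al \<and> odd (length al) = (\<not>b) \<and> alt (if odd (length al) then \<not>b else b) ga"
      using IH[OF al] Cons by simp
    have h1: "hd (al @ m # ga) = c" using Cons by simp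
    have "alt b ((a#al) @ m # ga) \<longleftrightarrow> (alt (\<not>b) al \<and> odd (length al) = (\<not>b) \<and> alt (if odd (length al) then \<not>b else b) ga) \<and> (a > c \<longleftrightarrow> b)"
      using e1 IH' h1 by simp
    also have "\<dots> \<longleftrightarrow> alt b (a#al) \<and> odd (length (a#al)) = b \<and> alt (if odd (length (a#al)) then b else \<not> b) ga"
      using e3 by auto
    finally show ?thesis by simp
  qed
qed

lemma down_up_split:
  assumes "\<forall>y\<in>set al. y > m" "\<forall>y\<in>set ga. y > m"
  shows "down_up (al @ m # ga) \<longleftrightarrow>
    (al = [] \<and> ga = []) \<or> (al \<noteq> [] \<and> odd (length al) \<and> down_up al \<and> down_up ga)"
proof (cases "al = []")
  case True
  have "down_up (al @ m # ga) \<longleftrightarrow> alt False ga \<and> (ga \<noteq> [] \<longrightarrow> False)"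
    using alt_split[OF assms, of True] True by (simp add: down_up_alt)
  then show ?thesis using True by auto
next
  case False
  have "down_up (al @ m # ga) \<longleftrightarrow> alt True al \<and> odd (length al) \<and> alt (if odd (length al) then True else False) ga"
    using alt_split[OF assms, of True] False by (simp add: down_up_alt)
  then show ?thesis using False by (auto simp: down_up_alt)
qed





lemma sum_Pow_card:
  fixes g :: "nat \<Rightarrow> real"
  assumes "finite T"
  shows "(\<Sum>A\<in>Pow T. g (card A)) = (\<Sum>j\<le>card T. real (card T choose j) * g j)"
proof -
  have "(\<Sum>A\<in>Pow T. g (card A)) = (\<Sum>j\<le>card T. \<Sum>A\<in>{A. A \<in> Pow T \<and> card A = j}. g (card A))"
    by (rule sum.group[symmetric]) (use assms in \<open>auto intro: card_mono\<close>)
  also have "\<dots> = (\<Sum>j\<le>card T. real (card T choose j) * g j)"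
  proof (rule sum.cong[OF refl])
    fix j
    have "(\<Sum>A\<in>{A. A \<in> Pow T \<and> card A = j}. g (card A)) = (\<Sum>A\<in>{A. A \<in> Pow T \<and> card A = j}. g j)"
      by (rule sum.cong) auto
    also have "\<dots> = real (card {A. A \<subseteq> T \<and> card A = j}) * g j" by simp
    also have "\<dots> = real (card T choose j) * g j" using n_subsets[OF assms, of j] by simp
    finally show "(\<Sum>A\<in>{A. A \<in> Pow T \<and> card A = j}. g (card A)) = real (card T choose j) * g j" .
  qed
  finally show ?thesis .
qed

lemma perms_decomp:
  assumes "finite S" "S \<noteq> {}"
  shows "(\<Sum>\<sigma>\<in>permutations_of_set S. h \<sigma>) =
    (\<Sum>A\<in>Pow (S - {Min S}). \<Sum>\<alpha>\<in>permutations_of_set A. \<Sum>\<gamma>\<in>permutations_of_set (S - {Min S} - A). h (\<alpha> @ Min S # \<gamma>))"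
proof -
  define m where "m = Min S"
  define T where "T = S - {m}"
  have mS: "m \<in> S" using assms by (simp add: m_def)
  have fT: "finite T" using assms by (simp add: T_def)
  have ST: "S = insert m T" using mS by (auto simp: T_def)
  have mT: "m \<notin> T" by (simp add: T_def)
  have "(\<Sum>A\<in>Pow T. \<Sum>\<alpha>\<in>permutations_of_set A. \<Sum>\<gamma>\<in>permutations_of_set (T - A). h (\<alpha> @ m # \<gamma>))
      = (\<Sum>A\<in>Pow T. \<Sum>p\<in>permutations_of_set A \<times> permutations_of_set (T - A). h (fst p @ m # snd p))"
    by (rule sum.cong[OF refl]) (simp add: sum.cartesian_product case_prod_beta)
  also have "\<dots> = (\<Sum>q\<in>(SIGMA A:Pow T. permutations_of_set A \<times> permutations_of_set (T - A)). h (fst (snd q) @ m # snd (snd q)))"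
    by (subst sum.Sigma) (use fT in \<open>auto simp: case_prod_beta\<close>)
  also have "\<dots> = (\<Sum>\<sigma>\<in>permutations_of_set S. h \<sigma>)"
  proof (rule sum.reindex_bij_witness[of _
        "\<lambda>\<sigma>. (set (takeWhile (\<lambda>x. x \<noteq> m) \<sigma>), (takeWhile (\<lambda>x. x \<noteq> m) \<sigma>, tl (dropWhile (\<lambda>x. x \<noteq> m) \<sigma>)))"
        "\<lambda>q. fst (snd q) @ m # snd (snd q)"])
    fix q assume q: "q \<in> (SIGMA A:Pow T. permutations_of_set A \<times> permutations_of_set (T - A))"
    obtain A al ga where qe: "q = (A, al, ga)" by (cases q) auto
    have A: "A \<subseteq> T" and al: "set al = A" "distinct al" and ga: "set ga = T - A" "distinct ga"
      using q qe by (auto simp: permutations_of_set_def)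
    have mal: "m \<notin> set al" using al A mT by auto
    have tw: "takeWhile (\<lambda>x. x \<noteq> m) (al @ m # ga) = al" by (rule trans[OF takeWhile_append2]) (use mal in auto)
    have dw: "dropWhile (\<lambda>x. x \<noteq> m) (al @ m # ga) = m # ga" by (rule trans[OF dropWhile_append2]) (use mal in auto)
    show "(\<lambda>\<sigma>. (set (takeWhile (\<lambda>x. x \<noteq> m) \<sigma>), (takeWhile (\<lambda>x. x \<noteq> m) \<sigma>, tl (dropWhile (\<lambda>x. x \<noteq> m) \<sigma>))))
            ((\<lambda>q. fst (snd q) @ m # snd (snd q)) q) = q"
      using qe tw dw al by simp
    show "(\<lambda>q. fst (snd q) @ m # snd (snd q)) q \<in> permutations_of_set S"
      using qe al ga A mT ST by (auto simp: permutations_of_set_def)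
    show "h ((\<lambda>q. fst (snd q) @ m # snd (snd q)) q) = h (fst (snd q) @ m # snd (snd q))" by simp
  next
    fix \<sigma> assume s: "\<sigma> \<in> permutations_of_set S"
    have ss: "set \<sigma> = S" "distinct \<sigma>" using s by (auto simp: permutations_of_set_def)
    define al where "al = takeWhile (\<lambda>x. x \<noteq> m) \<sigma>"
    define r where "r = dropWhile (\<lambda>x. x \<noteq> m) \<sigma>"
    have rne: "r \<noteq> []" using mS ss by (auto simp: r_def dropWhile_eq_Nil_conv)
    moreover have "hd r = m" using hd_dropWhile[of "\<lambda>x. x \<noteq> m" \<sigma>] rne unfolding r_def by blast
    ultimately have r: "r = m # tl r" by (metis list.collapse)
    have se: "\<sigma> = al @ m # tl r" using r takeWhile_dropWhile_id[of "\<lambda>x. x \<noteq> m" \<sigma>]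
      by (simp add: al_def r_def)
    have mal: "m \<notin> set al" unfolding al_def using set_takeWhileD[of m "\<lambda>x. x \<noteq> m" \<sigma>] by blast
    have d: "distinct (al @ m # tl r)" using ss se by simp
    have st: "set (al @ m # tl r) = S" using ss se by simp
    show "(\<lambda>q. fst (snd q) @ m # snd (snd q))
          ((\<lambda>\<sigma>. (set (takeWhile (\<lambda>x. x \<noteq> m) \<sigma>), (takeWhile (\<lambda>x. x \<noteq> m) \<sigma>, tl (dropWhile (\<lambda>x. x \<noteq> m) \<sigma>)))) \<sigma>) = \<sigma>"
    proof -
      have "takeWhile (\<lambda>x. x \<noteq> m) \<sigma> @ m # tl (dropWhile (\<lambda>x. x \<noteq> m) \<sigma>) = \<sigma>"
        using se unfolding al_def r_def by (rule sym)
      then show ?thesis by simp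
    qed
    have "set al \<subseteq> T" using st mal by (auto simp: T_def)
    moreover have "set (tl r) = T - set al" using st d by (auto simp: T_def)
    moreover have "distinct al" "distinct (tl r)" using d by auto
    ultimately show "(\<lambda>\<sigma>. (set (takeWhile (\<lambda>x. x \<noteq> m) \<sigma>), (takeWhile (\<lambda>x. x \<noteq> m) \<sigma>, tl (dropWhile (\<lambda>x. x \<noteq> m) \<sigma>)))) \<sigma>
          \<in> (SIGMA A:Pow T. permutations_of_set A \<times> permutations_of_set (T - A))"
      unfolding al_def[symmetric] r_def[symmetric] by (simp add: permutations_of_set_def)
  qed
  finally show ?thesis by (simp add: m_def T_def)
qed

lemma gt_Min:
  assumes "finite S" "A \<subseteq> S - {Min S}" "y \<in> A"
  shows "y > Min S"
proof -
  have y: "y \<in> S" "y \<noteq> Min S" using assms(2,3) by auto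
  have "Min S \<le> y" by (rule Min_le[OF assms(1) y(1)])
  then show ?thesis using y(2) by simp
qed

lemma decomp_prod:
  fixes h :: "nat list \<Rightarrow> real"
  assumes "finite S" "S \<noteq> {}"
  and hform: "\<And>A \<alpha> \<gamma>. A \<subseteq> S - {Min S} \<Longrightarrow> \<alpha> \<in> permutations_of_set A \<Longrightarrow> \<gamma> \<in> permutations_of_set (S - {Min S} - A)
       \<Longrightarrow> \<forall>y\<in>set \<alpha>. y > Min S \<Longrightarrow> \<forall>y\<in>set \<gamma>. y > Min S
       \<Longrightarrow> h (\<alpha> @ Min S # \<gamma>) = c (card A) * u \<alpha> * v \<gamma>"
  and U: "\<And>A. A \<subseteq> S - {Min S} \<Longrightarrow> (\<Sum>\<alpha>\<in>permutations_of_set A. u \<alpha>) = U (card A)"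
  and V: "\<And>B. B \<subseteq> S - {Min S} \<Longrightarrow> (\<Sum>\<gamma>\<in>permutations_of_set B. v \<gamma>) = V (card B)"
  shows "(\<Sum>\<sigma>\<in>permutations_of_set S. h \<sigma>) =
     (\<Sum>j\<le>card S - 1. real ((card S - 1) choose j) * (c j * U j * V (card S - 1 - j)))"
proof -
  define T where "T = S - {Min S}"
  have fT: "finite T" using assms by (simp add: T_def)
  have cT: "card T = card S - 1" using assms by (simp add: T_def)
  have "(\<Sum>\<sigma>\<in>permutations_of_set S. h \<sigma>) =
    (\<Sum>A\<in>Pow T. \<Sum>\<alpha>\<in>permutations_of_set A. \<Sum>\<gamma>\<in>permutations_of_set (T - A). h (\<alpha> @ Min S # \<gamma>))"
    using perms_decomp[OF assms(1,2)] by (simp add: T_def)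
  also have "\<dots> = (\<Sum>A\<in>Pow T. c (card A) * U (card A) * V (card T - card A))"
  proof (rule sum.cong[OF refl])
    fix A assume A: "A \<in> Pow T"
    have "(\<Sum>\<alpha>\<in>permutations_of_set A. \<Sum>\<gamma>\<in>permutations_of_set (T - A). h (\<alpha> @ Min S # \<gamma>))
        = (\<Sum>\<alpha>\<in>permutations_of_set A. \<Sum>\<gamma>\<in>permutations_of_set (T - A). c (card A) * u \<alpha> * v \<gamma>)"
    proof (intro sum.cong refl)
      fix \<alpha> \<gamma> assume a: "\<alpha> \<in> permutations_of_set A" and g: "\<gamma> \<in> permutations_of_set (T - A)"
      have "\<forall>y\<in>set \<alpha>. y > Min S" using a A assms(1) gt_Min[of S A] by (auto simp: T_def permutations_of_set_def)
      moreover have "\<forall>y\<in>set \<gamma>. y > Min S" using g assms(1) gt_Min[of S "T - A"] by (auto simp: T_def permutations_of_set_def)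
      ultimately show "h (\<alpha> @ Min S # \<gamma>) = c (card A) * u \<alpha> * v \<gamma>"
        using hform[of A \<alpha> \<gamma>] A a g by (auto simp: T_def)
    qed
    also have "\<dots> = (\<Sum>\<alpha>\<in>permutations_of_set A. (c (card A) * u \<alpha>) * (\<Sum>\<gamma>\<in>permutations_of_set (T - A). v \<gamma>))"
      by (simp add: sum_distrib_left)
    also have "\<dots> = (\<Sum>\<alpha>\<in>permutations_of_set A. c (card A) * u \<alpha>) * (\<Sum>\<gamma>\<in>permutations_of_set (T - A). v \<gamma>)"
      by (simp add: sum_distrib_right)
    also have "\<dots> = c (card A) * (\<Sum>\<alpha>\<in>permutations_of_set A. u \<alpha>) * (\<Sum>\<gamma>\<in>permutations_of_set (T - A). v \<gamma>)"
      by (simp add: sum_distrib_left)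
    also have "\<dots> = c (card A) * U (card A) * V (card (T - A))"
      using U[of A] V[of "T - A"] A by (auto simp: T_def)
    also have "card (T - A) = card T - card A" using A fT by (simp add: card_Diff_subset finite_subset)
    finally show "(\<Sum>\<alpha>\<in>permutations_of_set A. \<Sum>\<gamma>\<in>permutations_of_set (T - A). h (\<alpha> @ Min S # \<gamma>))
        = c (card A) * U (card A) * V (card T - card A)" .
  qed
  also have "\<dots> = (\<Sum>j\<le>card T. real (card T choose j) * (c j * U j * V (card T - j)))"
    by (rule sum_Pow_card[OF fT, of "\<lambda>j. c j * U j * V (card T - j)"])
  finally show ?thesis by (simp add: cT)
qed




definition sg :: "nat \<Rightarrow> real" where "sg j = (if j = 0 then 1 else -1)"
definition oi :: "nat \<Rightarrow> real" where "oi j = (if odd j then 1 else 0)"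

fun Eseq :: "nat \<Rightarrow> real" where
  "Eseq 0 = 1"
| "Eseq (Suc k) = (\<Sum>j\<le>k. real (k choose j) * (sg j * Eseq j * Eseq (k - j)))"

fun Fseq :: "real \<Rightarrow> nat \<Rightarrow> real" where
  "Fseq x 0 = 1"
| "Fseq x (Suc k) = (\<Sum>j\<le>k. real (k choose j) * (x * sg j * Fseq x j * Eseq (k - j)))"

fun Gseq :: "real \<Rightarrow> nat \<Rightarrow> real" where
  "Gseq x 0 = 1"
| "Gseq x (Suc k) = (\<Sum>j\<le>k. real (k choose j) * (x * sg j * Eseq j * Gseq x (k - j)))"

fun aseq :: "nat \<Rightarrow> real" where
  "aseq 0 = 1"
| "aseq (Suc k) = (if k = 0 then 1 else (\<Sum>j\<le>k. real (k choose j) * (oi j * aseq j * aseq (k - j))))"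

fun Dseq :: "real \<Rightarrow> nat \<Rightarrow> real" where
  "Dseq b 0 = 1"
| "Dseq b (Suc k) = (if k = 0 then b else (\<Sum>j\<le>k. real (k choose j) * (b * oi j * aseq j * Dseq b (k - j))))"

lemma perm_facts:
  assumes "\<alpha> \<in> permutations_of_set A" "finite A"
  shows "length \<alpha> = card A" "(\<alpha> = []) \<longleftrightarrow> card A = 0"
proof -
  have s: "set \<alpha> = A" "distinct \<alpha>" using assms(1) by (auto simp: permutations_of_set_def)
  show l: "length \<alpha> = card A" using s distinct_card by fastforce
  show "(\<alpha> = []) \<longleftrightarrow> card A = 0" using l length_0_conv by metis
qed

lemma sub_finite: "finite S \<Longrightarrow> A \<subseteq> S - {Min S} \<Longrightarrow> finite A"
  by (meson finite_Diff finite_subset)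

lemma sub_card: assumes "finite S" "S \<noteq> {}" "A \<subseteq> S - {Min S}" shows "card A < card S"
proof -
  have "card A \<le> card (S - {Min S})" by (rule card_mono) (use assms in auto)
  also have "\<dots> < card S" using assms by (simp add: card_gt_0_iff)
  finally show ?thesis .
qed

lemma E_comb: "finite S \<Longrightarrow> (\<Sum>\<sigma>\<in>permutations_of_set S. (-1::real) ^ des \<sigma>) = Eseq (card S)"
proof (induction "card S" arbitrary: S rule: less_induct)
  case less
  show ?case
  proof (cases "S = {}")
    case True then show ?thesis by simp
  next
    case False
    obtain k where k: "card S = Suc k" using less.prems False by (cases "card S") auto
    have "(\<Sum>\<sigma>\<in>permutations_of_set S. (-1::real) ^ des \<sigma>) =
       (\<Sum>j\<le>card S - 1. real ((card S - 1) choose j) * (sg j * Eseq j * Eseq (card S - 1 - j)))"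
    proof (rule decomp_prod[OF less.prems False])
      fix A \<alpha> \<gamma> assume A: "A \<subseteq> S - {Min S}" and a: "\<alpha> \<in> permutations_of_set A"
        and g: "\<gamma> \<in> permutations_of_set (S - {Min S} - A)"
        and ha: "\<forall>y\<in>set \<alpha>. y > Min S" and hg: "\<forall>y\<in>set \<gamma>. y > Min S"
      have fA: "finite A" using sub_finite[OF less.prems A] .
      show "(-1::real) ^ des (\<alpha> @ Min S # \<gamma>) = sg (card A) * (-1) ^ des \<alpha> * (-1) ^ des \<gamma>"
        proof -
        have d: "des (\<alpha> @ Min S # \<gamma>) = des \<alpha> + des \<gamma> + (if card A = 0 then 0 else 1)"
          using des_split[OF ha hg] perm_facts(2)[OF a fA] by simp
        show ?thesis by (cases "card A = 0") (simp_all add: d sg_def power_add)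
      qed
    next
      fix A assume A: "A \<subseteq> S - {Min S}"
      show "(\<Sum>\<alpha>\<in>permutations_of_set A. (-1::real) ^ des \<alpha>) = Eseq (card A)"
        using less.hyps[OF sub_card[OF less.prems False A] sub_finite[OF less.prems A]] .
    next
      fix A assume A: "A \<subseteq> S - {Min S}"
      show "(\<Sum>\<alpha>\<in>permutations_of_set A. (-1::real) ^ des \<alpha>) = Eseq (card A)"
        using less.hyps[OF sub_card[OF less.prems False A] sub_finite[OF less.prems A]] .
    qed
    also have "\<dots> = Eseq (card S)" using k by simp
    finally show ?thesis .
  qed
qed

lemma F_comb: "finite S \<Longrightarrow> (\<Sum>\<sigma>\<in>permutations_of_set S. (-1::real) ^ des \<sigma> * x ^ LRmin \<sigma>) = Fseq x (card S)"
proof (induction "card S" arbitrary: S rule: less_induct)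
  case less
  show ?case
  proof (cases "S = {}")
    case True then show ?thesis by (simp add: LRmin_def)
  next
    case False
    obtain k where k: "card S = Suc k" using less.prems False by (cases "card S") auto
    have "(\<Sum>\<sigma>\<in>permutations_of_set S. (-1::real) ^ des \<sigma> * x ^ LRmin \<sigma>) =
       (\<Sum>j\<le>card S - 1. real ((card S - 1) choose j) * ((x * sg j) * Fseq x j * Eseq (card S - 1 - j)))"
    proof (rule decomp_prod[OF less.prems False])
      fix A \<alpha> \<gamma> assume A: "A \<subseteq> S - {Min S}" and a: "\<alpha> \<in> permutations_of_set A"
        and g: "\<gamma> \<in> permutations_of_set (S - {Min S} - A)"
        and ha: "\<forall>y\<in>set \<alpha>. y > Min S" and hg: "\<forall>y\<in>set \<gamma>. y > Min S"
      have fA: "finite A" using sub_finite[OF less.prems A] .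
      show "(-1::real) ^ des (\<alpha> @ Min S # \<gamma>) * x ^ LRmin (\<alpha> @ Min S # \<gamma>)
          = (x * sg (card A)) * ((-1) ^ des \<alpha> * x ^ LRmin \<alpha>) * (-1) ^ des \<gamma>"
        proof -
        have d: "des (\<alpha> @ Min S # \<gamma>) = des \<alpha> + des \<gamma> + (if card A = 0 then 0 else 1)"
          using des_split[OF ha hg] perm_facts(2)[OF a fA] by simp
        have l: "LRmin (\<alpha> @ Min S # \<gamma>) = LRmin \<alpha> + 1" using LRmin_split[OF ha hg] .
        show ?thesis by (cases "card A = 0") (simp_all add: d l sg_def power_add mult_ac)
      qed
    next
      fix A assume A: "A \<subseteq> S - {Min S}"
      show "(\<Sum>\<alpha>\<in>permutations_of_set A. (-1::real) ^ des \<alpha> * x ^ LRmin \<alpha>) = Fseq x (card A)"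
        using less.hyps[OF sub_card[OF less.prems False A] sub_finite[OF less.prems A]] .
    next
      fix A assume A: "A \<subseteq> S - {Min S}"
      show "(\<Sum>\<alpha>\<in>permutations_of_set A. (-1::real) ^ des \<alpha>) = Eseq (card A)"
        using E_comb[OF sub_finite[OF less.prems A]] .
    qed
    also have "\<dots> = Fseq x (card S)" using k by (simp add: mult.assoc)
    finally show ?thesis .
  qed
qed

lemma G_comb: "finite S \<Longrightarrow> (\<Sum>\<sigma>\<in>permutations_of_set S. (-1::real) ^ des \<sigma> * x ^ RLmin \<sigma>) = Gseq x (card S)"
proof (induction "card S" arbitrary: S rule: less_induct)
  case less
  show ?case
  proof (cases "S = {}")
    case True then show ?thesis by simp
  next
    case False
    obtain k where k: "card S = Suc k" using less.prems False by (cases "card S") auto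
    have "(\<Sum>\<sigma>\<in>permutations_of_set S. (-1::real) ^ des \<sigma> * x ^ RLmin \<sigma>) =
       (\<Sum>j\<le>card S - 1. real ((card S - 1) choose j) * ((x * sg j) * Eseq j * Gseq x (card S - 1 - j)))"
    proof (rule decomp_prod[OF less.prems False])
      fix A \<alpha> \<gamma> assume A: "A \<subseteq> S - {Min S}" and a: "\<alpha> \<in> permutations_of_set A"
        and g: "\<gamma> \<in> permutations_of_set (S - {Min S} - A)"
        and ha: "\<forall>y\<in>set \<alpha>. y > Min S" and hg: "\<forall>y\<in>set \<gamma>. y > Min S"
      have fA: "finite A" using sub_finite[OF less.prems A] .
      show "(-1::real) ^ des (\<alpha> @ Min S # \<gamma>) * x ^ RLmin (\<alpha> @ Min S # \<gamma>)
          = (x * sg (card A)) * (-1) ^ des \<alpha> * ((-1) ^ des \<gamma> * x ^ RLmin \<gamma>)"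
        proof -
        have d: "des (\<alpha> @ Min S # \<gamma>) = des \<alpha> + des \<gamma> + (if card A = 0 then 0 else 1)"
          using des_split[OF ha hg] perm_facts(2)[OF a fA] by simp
        have l: "RLmin (\<alpha> @ Min S # \<gamma>) = RLmin \<gamma> + 1" using RLmin_split[OF ha hg] .
        show ?thesis by (cases "card A = 0") (simp_all add: d l sg_def power_add mult_ac)
      qed
    next
      fix A assume A: "A \<subseteq> S - {Min S}"
      show "(\<Sum>\<alpha>\<in>permutations_of_set A. (-1::real) ^ des \<alpha>) = Eseq (card A)"
        using E_comb[OF sub_finite[OF less.prems A]] .
    next
      fix A assume A: "A \<subseteq> S - {Min S}"
      show "(\<Sum>\<alpha>\<in>permutations_of_set A. (-1::real) ^ des \<alpha> * x ^ RLmin \<alpha>) = Gseq x (card A)"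
        using less.hyps[OF sub_card[OF less.prems False A] sub_finite[OF less.prems A]] .
    qed
    also have "\<dots> = Gseq x (card S)" using k by (simp add: mult.assoc)
    finally show ?thesis .
  qed
qed




lemma du_single: "down_up [m]" by (simp add: down_up_def)

lemma no_both_nil:
  assumes "finite S" "card S \<ge> 2" "A \<subseteq> S - {Min S}" "\<alpha> \<in> permutations_of_set A"
    "\<gamma> \<in> permutations_of_set (S - {Min S} - A)"
  shows "\<not> (\<alpha> = [] \<and> \<gamma> = [])"
proof
  assume h: "\<alpha> = [] \<and> \<gamma> = []"
  have "A = {}" using h assms(4) by (auto simp: permutations_of_set_def)
  moreover have "S - {Min S} - A = {}" using h assms(5) by (auto simp: permutations_of_set_def)
  ultimately have "S - {Min S} = {}" by simp
  then have "card (S - {Min S}) = 0" by (metis card.empty)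
  moreover have "S \<noteq> {}" using assms(2) by auto
  ultimately show False using assms(1,2) by (simp add: card_gt_0_iff)
qed

lemma a_comb: "finite S \<Longrightarrow> (\<Sum>\<sigma>\<in>permutations_of_set S. if down_up \<sigma> then 1 else 0) = aseq (card S)"
proof (induction "card S" arbitrary: S rule: less_induct)
  case less
  consider "card S = 0" | "card S = 1" | "card S \<ge> 2" by linarith
  then show ?case
  proof cases
    case 1
    then have "S = {}" using less.prems by simp
    then show ?thesis by (simp add: down_up_def)
  next
    case 2
    then obtain m where "S = {m}" by (auto simp: card_1_singleton_iff)
    then show ?thesis by (simp add: du_single)
  next
    case 3
    have ne: "S \<noteq> {}" using 3 by auto
    obtain k where k: "card S = Suc k" "k \<noteq> 0" using 3 by (cases "card S") auto
    have "(\<Sum>\<sigma>\<in>permutations_of_set S. if down_up \<sigma> then 1 else 0) =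
       (\<Sum>j\<le>card S - 1. real ((card S - 1) choose j) * (oi j * aseq j * aseq (card S - 1 - j)))"
    proof (rule decomp_prod[OF less.prems ne])
      fix A \<alpha> \<gamma> assume A: "A \<subseteq> S - {Min S}" and a: "\<alpha> \<in> permutations_of_set A"
        and g: "\<gamma> \<in> permutations_of_set (S - {Min S} - A)"
        and ha: "\<forall>y\<in>set \<alpha>. y > Min S" and hg: "\<forall>y\<in>set \<gamma>. y > Min S"
      have fA: "finite A" using sub_finite[OF less.prems A] .
      have nb: "\<not> (\<alpha> = [] \<and> \<gamma> = [])" by (rule no_both_nil[OF less.prems 3 A a g])
      have du: "down_up (\<alpha> @ Min S # \<gamma>) \<longleftrightarrow> odd (card A) \<and> down_up \<alpha> \<and> down_up \<gamma>"
        using down_up_split[OF ha hg] nb perm_facts[OF a fA] by auto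
      show "(if down_up (\<alpha> @ Min S # \<gamma>) then 1 else 0) =
          oi (card A) * (if down_up \<alpha> then 1 else 0) * (if down_up \<gamma> then 1 else (0::real))"
        unfolding du oi_def by simp
    next
      fix A assume A: "A \<subseteq> S - {Min S}"
      show "(\<Sum>\<alpha>\<in>permutations_of_set A. if down_up \<alpha> then 1 else 0) = aseq (card A)"
        using less.hyps[OF sub_card[OF less.prems ne A] sub_finite[OF less.prems A]] .
    next
      fix A assume A: "A \<subseteq> S - {Min S}"
      show "(\<Sum>\<alpha>\<in>permutations_of_set A. if down_up \<alpha> then 1 else 0) = aseq (card A)"
        using less.hyps[OF sub_card[OF less.prems ne A] sub_finite[OF less.prems A]] .
    qed
    also have "\<dots> = aseq (card S)" using k by simp
    finally show ?thesis .
  qed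
qed

lemma D_comb: "finite S \<Longrightarrow> (\<Sum>\<sigma>\<in>permutations_of_set S. if down_up \<sigma> then b ^ RLmin \<sigma> else 0) = Dseq b (card S)"
proof (induction "card S" arbitrary: S rule: less_induct)
  case less
  consider "card S = 0" | "card S = 1" | "card S \<ge> 2" by linarith
  then show ?case
  proof cases
    case 1
    then have "S = {}" using less.prems by simp
    then show ?thesis by (simp add: down_up_def)
  next
    case 2
    then obtain m where "S = {m}" by (auto simp: card_1_singleton_iff)
    then show ?thesis by (simp add: du_single RLmin_Cons)
  next
    case 3
    have ne: "S \<noteq> {}" using 3 by auto
    obtain k where k: "card S = Suc k" "k \<noteq> 0" using 3 by (cases "card S") auto
    have "(\<Sum>\<sigma>\<in>permutations_of_set S. if down_up \<sigma> then b ^ RLmin \<sigma> else 0) =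
       (\<Sum>j\<le>card S - 1. real ((card S - 1) choose j) * ((b * oi j) * aseq j * Dseq b (card S - 1 - j)))"
    proof (rule decomp_prod[OF less.prems ne])
      fix A \<alpha> \<gamma> assume A: "A \<subseteq> S - {Min S}" and a: "\<alpha> \<in> permutations_of_set A"
        and g: "\<gamma> \<in> permutations_of_set (S - {Min S} - A)"
        and ha: "\<forall>y\<in>set \<alpha>. y > Min S" and hg: "\<forall>y\<in>set \<gamma>. y > Min S"
      have fA: "finite A" using sub_finite[OF less.prems A] .
      have nb: "\<not> (\<alpha> = [] \<and> \<gamma> = [])" by (rule no_both_nil[OF less.prems 3 A a g])
      have du: "down_up (\<alpha> @ Min S # \<gamma>) \<longleftrightarrow> odd (card A) \<and> down_up \<alpha> \<and> down_up \<gamma>"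
        using down_up_split[OF ha hg] nb perm_facts[OF a fA] by auto
      have r: "RLmin (\<alpha> @ Min S # \<gamma>) = RLmin \<gamma> + 1" using RLmin_split[OF ha hg] .
      show "(if down_up (\<alpha> @ Min S # \<gamma>) then b ^ RLmin (\<alpha> @ Min S # \<gamma>) else 0) =
          (b * oi (card A)) * (if down_up \<alpha> then 1 else 0) * (if down_up \<gamma> then b ^ RLmin \<gamma> else 0)"
        unfolding du oi_def r by simp
    next
      fix A assume A: "A \<subseteq> S - {Min S}"
      show "(\<Sum>\<alpha>\<in>permutations_of_set A. if down_up \<alpha> then 1 else 0) = aseq (card A)"
        using a_comb[OF sub_finite[OF less.prems A]] .
    next
      fix A assume A: "A \<subseteq> S - {Min S}"
      show "(\<Sum>\<alpha>\<in>permutations_of_set A. if down_up \<alpha> then b ^ RLmin \<alpha> else 0) = Dseq b (card A)"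
        using less.hyps[OF sub_card[OF less.prems ne A] sub_finite[OF less.prems A]] .
    qed
    also have "\<dots> = Dseq b (card S)" using k by (simp add: mult.assoc)
    finally show ?thesis .
  qed
qed

lemma P_comb:
  assumes "finite S" "card S = Suc n"
  shows "(\<Sum>\<sigma>\<in>permutations_of_set S. (-1::real) ^ des \<sigma> * x ^ (LRmin \<sigma> + RLmin \<sigma> - 2)) =
     (\<Sum>j\<le>n. real (n choose j) * (sg j * Fseq x j * Gseq x (n - j)))"
proof -
  have ne: "S \<noteq> {}" using assms by auto
  have "(\<Sum>\<sigma>\<in>permutations_of_set S. (-1::real) ^ des \<sigma> * x ^ (LRmin \<sigma> + RLmin \<sigma> - 2)) =
     (\<Sum>j\<le>card S - 1. real ((card S - 1) choose j) * (sg j * Fseq x j * Gseq x (card S - 1 - j)))"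
  proof (rule decomp_prod[OF assms(1) ne])
    fix A \<alpha> \<gamma> assume A: "A \<subseteq> S - {Min S}" and a: "\<alpha> \<in> permutations_of_set A"
      and g: "\<gamma> \<in> permutations_of_set (S - {Min S} - A)"
      and ha: "\<forall>y\<in>set \<alpha>. y > Min S" and hg: "\<forall>y\<in>set \<gamma>. y > Min S"
    have fA: "finite A" using sub_finite[OF assms(1) A] .
    have d: "des (\<alpha> @ Min S # \<gamma>) = des \<alpha> + des \<gamma> + (if card A = 0 then 0 else 1)"
      using des_split[OF ha hg] perm_facts(2)[OF a fA] by simp
    have e: "LRmin (\<alpha> @ Min S # \<gamma>) + RLmin (\<alpha> @ Min S # \<gamma>) - 2 = LRmin \<alpha> + RLmin \<gamma>"
      using LRmin_split[OF ha hg] RLmin_split[OF ha hg] by simp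
    show "(-1::real) ^ des (\<alpha> @ Min S # \<gamma>) * x ^ (LRmin (\<alpha> @ Min S # \<gamma>) + RLmin (\<alpha> @ Min S # \<gamma>) - 2)
        = sg (card A) * ((-1) ^ des \<alpha> * x ^ LRmin \<alpha>) * ((-1) ^ des \<gamma> * x ^ RLmin \<gamma>)"
      unfolding e by (cases "card A = 0") (simp_all add: d sg_def power_add mult_ac)
  next
    fix A assume A: "A \<subseteq> S - {Min S}"
    show "(\<Sum>\<alpha>\<in>permutations_of_set A. (-1::real) ^ des \<alpha> * x ^ LRmin \<alpha>) = Fseq x (card A)"
      using F_comb[OF sub_finite[OF assms(1) A]] .
  next
    fix A assume A: "A \<subseteq> S - {Min S}"
    show "(\<Sum>\<alpha>\<in>permutations_of_set A. (-1::real) ^ des \<alpha> * x ^ RLmin \<alpha>) = Gseq x (card A)"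
      using G_comb[OF sub_finite[OF assms(1) A]] .
  qed
  then show ?thesis using assms(2) by simp
qed




definition tseq :: "nat \<Rightarrow> real" where
  "tseq k = (if odd k then (-1) ^ (k div 2) * aseq k else 0)"

lemma tseq_0[simp]: "tseq 0 = 0" by (simp add: tseq_def)

lemma par1:
  assumes "even (k::nat)" "odd j" "j \<le> k"
  shows "j div 2 + (k - j) div 2 + 1 = k div 2"
proof -
  obtain a where a: "k = 2 * a" using assms(1) by (rule evenE)
  obtain c where c: "j = 2 * c + 1" using assms(2) by (rule oddE)
  have ca: "c < a" using assms(3) a c by simp
  have kj: "k - j = 2 * (a - c - 1) + 1" using a c ca by simp
  have d1: "j div 2 = c" using c by simp
  have d2: "(k - j) div 2 = a - c - 1" unfolding kj by simp
  have d3: "k div 2 = a" using a by simp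
  show ?thesis unfolding d1 d2 d3 using ca by simp
qed

lemma par2:
  assumes "odd (k::nat)" "odd j" "j \<le> k"
  shows "j div 2 + (k - j) div 2 = k div 2"
proof -
  obtain a where a: "k = 2 * a + 1" using assms(1) by (rule oddE)
  obtain c where c: "j = 2 * c + 1" using assms(2) by (rule oddE)
  have ca: "c \<le> a" using assms(3) a c by simp
  have kj: "k - j = 2 * (a - c)" using a c ca by simp
  have d1: "j div 2 = c" using c by simp
  have d2: "(k - j) div 2 = a - c" unfolding kj by simp
  have d3: "k div 2 = a" using a by simp
  show ?thesis unfolding d1 d2 d3 using ca by simp
qed

lemma odd_Suc_div: assumes "odd (k::nat)" shows "Suc k div 2 = Suc (k div 2)"
proof -
  obtain a where a: "k = 2 * a + 1" using assms by (rule oddE)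
  have "Suc k = 2 * (a + 1)" using a by simp
  then show ?thesis using a by simp
qed

lemma tt_term:
  assumes "even k" "j \<le> k"
  shows "- (tseq j * tseq (k - j)) = (-1) ^ (k div 2) * (oi j * aseq j * aseq (k - j))"
proof (cases "odd j")
  case True
  then have o2: "odd (k - j)" using assms by simp
  have "- (tseq j * tseq (k - j)) = - ((-1) ^ (j div 2 + (k - j) div 2)) * (aseq j * aseq (k - j))"
    using True o2 by (simp add: tseq_def power_add mult_ac)
  also have "- ((-1::real) ^ (j div 2 + (k - j) div 2)) = (-1) ^ (k div 2)"
    using par1[OF assms(1) True assms(2)] by (metis mult_minus1 power_Suc add.commute Suc_eq_plus1)
  finally show ?thesis using True by (simp add: oi_def)
next
  case False
  then show ?thesis by (simp add: tseq_def oi_def)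
qed

lemma tt_zero:
  assumes "odd k" "j \<le> k"
  shows "tseq j * tseq (k - j) = 0"
  using assms by (cases "odd j") (auto simp: tseq_def)

lemma E_t: "k \<ge> 1 \<Longrightarrow> Eseq k = tseq k"
proof (induction k rule: less_induct)
  case (less k)
  obtain k' where k: "k = Suc k'" using less.prems by (cases k) auto
  show ?case
  proof (cases "k' = 0")
    case True then show ?thesis using k by (simp add: sg_def tseq_def)
  next
    case False
    have tm: "real (k' choose j) * (sg j * Eseq j * Eseq (k' - j)) =
        real (k' choose j) * (- (tseq j * tseq (k' - j)))
        + (if j = 0 then Eseq k' else 0) - (if j = k' then Eseq k' else 0)" if j: "j \<le> k'" for j
    proof -
      consider "j = 0" | "j = k'" | "0 < j \<and> j < k'" using j by linarith
      then show ?thesis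
      proof cases
        case 1 then show ?thesis using False by (simp add: sg_def)
      next
        case 2 then show ?thesis using False by (simp add: sg_def)
      next
        case 3
        have "Eseq j = tseq j" using less.IH[of j] 3 k by simp
        moreover have "Eseq (k' - j) = tseq (k' - j)"
        proof -
          have "k' - j < k" "1 \<le> k' - j" using 3 k by auto
          then show ?thesis using less.IH by blast
        qed
        ultimately show ?thesis using 3 by (simp add: sg_def)
      qed
    qed
    have "Eseq k = (\<Sum>j\<le>k'. real (k' choose j) * (sg j * Eseq j * Eseq (k' - j)))" using k by simp
    also have "\<dots> = (\<Sum>j\<le>k'. real (k' choose j) * (- (tseq j * tseq (k' - j)))
        + (if j = 0 then Eseq k' else 0) - (if j = k' then Eseq k' else 0))"
      by (rule sum.cong[OF refl]) (use tm in auto)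
    also have "\<dots> = (\<Sum>j\<le>k'. real (k' choose j) * (- (tseq j * tseq (k' - j))))"
    proof -
      have d1: "(\<Sum>j\<le>k'. if j = 0 then Eseq k' else 0) = Eseq k'" by (simp add: sum.delta)
      have d2: "(\<Sum>j\<le>k'. if j = k' then Eseq k' else 0) = Eseq k'" by (simp add: sum.delta)
      show ?thesis unfolding sum_subtractf sum.distrib d1 d2 by simp
    qed
    also have "\<dots> = tseq k"
    proof (cases "even k'")
      case True
      have "(\<Sum>j\<le>k'. real (k' choose j) * (- (tseq j * tseq (k' - j))))
          = (\<Sum>j\<le>k'. (-1) ^ (k' div 2) * (real (k' choose j) * (oi j * aseq j * aseq (k' - j))))"
        by (rule sum.cong[OF refl]) (simp add: tt_term[OF True])
      also have "\<dots> = (-1) ^ (k' div 2) * aseq k" using k False by (simp add: sum_distrib_left)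
      also have "\<dots> = tseq k" using k True by (simp add: tseq_def)
      finally show ?thesis .
    next
      case False
      have "(\<Sum>j\<le>k'. real (k' choose j) * (- (tseq j * tseq (k' - j)))) = 0"
        by (rule sum.neutral) (use tt_zero[OF False] in auto)
      then show ?thesis using k False by (simp add: tseq_def)
    qed
    finally show ?thesis .
  qed
qed

definition Rseq :: "real \<Rightarrow> nat \<Rightarrow> real" where
  "Rseq b n = (if even n then (-1) ^ (n div 2) * Dseq b n else 0)"

lemma R_rec: "Rseq b (Suc k) = (\<Sum>j\<le>k. real (k choose j) * (- b * tseq j * Rseq b (k - j)))"
proof (cases "odd k")
  case True
  have k0: "k \<noteq> 0" using True by (cases k) auto
  have "(\<Sum>j\<le>k. real (k choose j) * (- b * tseq j * Rseq b (k - j)))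
      = (\<Sum>j\<le>k. (-1) ^ (Suc k div 2) * (real (k choose j) * (b * oi j * aseq j * Dseq b (k - j))))"
  proof (rule sum.cong[OF refl])
    fix j assume "j \<in> {..k}" then have j: "j \<le> k" by simp
    show "real (k choose j) * (- b * tseq j * Rseq b (k - j)) =
        (-1) ^ (Suc k div 2) * (real (k choose j) * (b * oi j * aseq j * Dseq b (k - j)))"
    proof (cases "odd j")
      case oj: True
      have e: "even (k - j)" using True oj j by simp
      have s: "- ((-1::real) ^ (j div 2 + (k - j) div 2)) = (-1) ^ (Suc k div 2)"
      proof -
        have "Suc k div 2 = Suc (j div 2 + (k - j) div 2)" using par2[OF True oj j] odd_Suc_div[OF True] by simp
        then show ?thesis by simp
      qed
      have "real (k choose j) * (- b * tseq j * Rseq b (k - j)) =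
          (- ((-1::real) ^ (j div 2 + (k - j) div 2))) * (real (k choose j) * (b * aseq j * Dseq b (k - j)))"
        using oj e by (simp add: tseq_def Rseq_def power_add mult_ac)
      then show ?thesis unfolding s using oj by (simp add: oi_def)
    next
      case False then show ?thesis by (simp add: tseq_def oi_def)
    qed
  qed
  also have "\<dots> = (-1) ^ (Suc k div 2) * Dseq b (Suc k)" using k0 by (simp add: sum_distrib_left)
  also have "\<dots> = Rseq b (Suc k)" using True by (simp add: Rseq_def)
  finally show ?thesis by simp
next
  case False
  have "(\<Sum>j\<le>k. real (k choose j) * (- b * tseq j * Rseq b (k - j))) = 0"
  proof (rule sum.neutral, intro ballI)
    fix j assume "j \<in> {..k}" then have j: "j \<le> k" by simp
    show "real (k choose j) * (- b * tseq j * Rseq b (k - j)) = 0"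
      using False j by (cases "odd j") (auto simp: tseq_def Rseq_def)
  qed
  then show ?thesis using False by (simp add: Rseq_def)
qed




definition egf :: "(nat \<Rightarrow> real) \<Rightarrow> real fps" where
  "egf c = Abs_fps (\<lambda>n. c n / fact n)"

lemma egf_nth[simp]: "fps_nth (egf c) n = c n / fact n"
  by (simp add: egf_def)

lemma egf_eqD: "egf a = egf b \<Longrightarrow> a n = b n"
proof -
  assume "egf a = egf b"
  then have "fps_nth (egf a) n = fps_nth (egf b) n" by simp
  then show "a n = b n" by simp
qed

lemma egf_mult: "egf a * egf b = egf (\<lambda>n. \<Sum>i\<le>n. real (n choose i) * (a i * b (n - i)))"
proof (rule fps_ext)
  fix n
  have "fps_nth (egf a * egf b) n = (\<Sum>i=0..n. a i / fact i * (b (n - i) / fact (n - i)))"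
    by (simp add: fps_mult_nth)
  also have "\<dots> = (\<Sum>i\<le>n. real (n choose i) * (a i * b (n - i)) / fact n)"
  proof (rule sum.cong)
    show "{0..n} = {..n}" by auto
  next
    fix i assume "i \<in> {..n}"
    then have i: "i \<le> n" by simp
    have "real (n choose i) = fact n / (fact i * fact (n - i))" using binomial_fact[OF i] by simp
    then show "a i / fact i * (b (n - i) / fact (n - i)) = real (n choose i) * (a i * b (n - i)) / fact n"
      by (simp add: field_simps)
  qed
  also have "\<dots> = fps_nth (egf (\<lambda>n. \<Sum>i\<le>n. real (n choose i) * (a i * b (n - i)))) n"
    by (simp add: sum_divide_distrib)
  finally show "fps_nth (egf a * egf b) n = fps_nth (egf (\<lambda>n. \<Sum>i\<le>n. real (n choose i) * (a i * b (n - i)))) n" .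
qed

lemma egf_deriv: "fps_deriv (egf c) = egf (\<lambda>n. c (Suc n))"
proof (rule fps_ext)
  fix n
  have "fps_nth (fps_deriv (egf c)) n = of_nat (Suc n) * (c (Suc n) / fact (Suc n))"
    by (simp add: fps_deriv_nth)
  also have "\<dots> = c (Suc n) / fact n"
  proof -
    have r: "real (Suc n) \<noteq> 0" by simp
    have "fact (Suc n) = real (Suc n) * (fact n :: real)" by (simp only: fact_Suc of_nat_mult)
    then show ?thesis using r by simp
  qed
  finally show "fps_nth (fps_deriv (egf c)) n = fps_nth (egf (\<lambda>n. c (Suc n))) n" by simp
qed

lemma egf_sg: "c 0 = 1 \<Longrightarrow> egf (\<lambda>j. sg j * c j) = 2 - egf c"
  by (rule fps_ext) (simp add: sg_def fps_numeral_nth)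

lemma egf_E: "egf Eseq = 1 + egf tseq"
proof (rule fps_ext)
  fix n show "fps_nth (egf Eseq) n = fps_nth (1 + egf tseq) n"
    by (cases n) (simp_all add: E_t del: Eseq.simps(2))
qed

lemma ring_id:
  fixes y F E G T :: "'a::comm_ring_1"
  shows "- (y * ((2 - F) * (1 + T))) * G + (2 - F) * (y * ((2 - (1 + T)) * G)) = (- (2 * y)) * (T * ((2 - F) * G))"
  by (simp add: algebra_simps)

definition Pseq :: "real \<Rightarrow> nat \<Rightarrow> real" where
  "Pseq x n = (\<Sum>j\<le>n. real (n choose j) * (sg j * Fseq x j * Gseq x (n - j)))"

lemma P_rec: "Pseq x (Suc n) = (\<Sum>j\<le>n. real (n choose j) * (- (2 * x) * tseq j * Pseq x (n - j)))"
proof -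
  define EF where "EF = egf (Fseq x)"
  define EG where "EG = egf (Gseq x)"
  define EE where "EE = egf Eseq"
  define ET where "ET = egf tseq"
  have P: "egf (Pseq x) = (2 - EF) * EG"
  proof -
    have "(2 - EF) * EG = egf (\<lambda>j. sg j * Fseq x j) * egf (Gseq x)" by (simp add: EF_def EG_def egf_sg)
    also have "\<dots> = egf (Pseq x)" unfolding egf_mult Pseq_def by (simp add: mult.assoc)
    finally show ?thesis by simp
  qed
  have dF: "fps_deriv EF = fps_const x * ((2 - EF) * EE)"
  proof -
    have "fps_const x * ((2 - EF) * EE) = fps_const x * (egf (\<lambda>j. sg j * Fseq x j) * egf Eseq)"
      by (simp add: EF_def EE_def egf_sg)
    also have "\<dots> = egf (\<lambda>n. x * (\<Sum>i\<le>n. real (n choose i) * (sg i * Fseq x i * Eseq (n - i))))"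
      by (rule fps_ext) (simp add: egf_mult)
    also have "\<dots> = egf (\<lambda>n. Fseq x (Suc n))"
      by (simp add: sum_distrib_left mult_ac)
    also have "\<dots> = fps_deriv EF" by (simp add: EF_def egf_deriv)
    finally show ?thesis by simp
  qed
  have dG: "fps_deriv EG = fps_const x * ((2 - EE) * EG)"
  proof -
    have "fps_const x * ((2 - EE) * EG) = fps_const x * (egf (\<lambda>j. sg j * Eseq j) * egf (Gseq x))"
      by (simp add: EG_def EE_def egf_sg)
    also have "\<dots> = egf (\<lambda>n. x * (\<Sum>i\<le>n. real (n choose i) * (sg i * Eseq i * Gseq x (n - i))))"
      by (rule fps_ext) (simp add: egf_mult)
    also have "\<dots> = egf (\<lambda>n. Gseq x (Suc n))"
      by (simp add: sum_distrib_left mult_ac)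
    also have "\<dots> = fps_deriv EG" by (simp add: EG_def egf_deriv)
    finally show ?thesis by simp
  qed
  have EE: "EE = 1 + ET" by (simp add: EE_def ET_def egf_E)
  have cst: "fps_const (- (2 * x)) = - (2 * fps_const x)" by (simp add: numeral_fps_const)
  have "fps_deriv (egf (Pseq x)) = - fps_deriv EF * EG + (2 - EF) * fps_deriv EG"
    unfolding P by simp
  also have "\<dots> = fps_const (- (2 * x)) * (ET * ((2 - EF) * EG))"
    unfolding dF dG EE cst by (rule ring_id)
  also have "\<dots> = egf (\<lambda>n. (- (2 * x)) * (\<Sum>j\<le>n. real (n choose j) * (tseq j * Pseq x (n - j))))"
    unfolding P[symmetric] ET_def by (rule fps_ext) (simp add: egf_mult)
  finally have "egf (\<lambda>n. Pseq x (Suc n)) = egf (\<lambda>n. (- (2 * x)) * (\<Sum>j\<le>n. real (n choose j) * (tseq j * Pseq x (n - j))))"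
    by (simp add: egf_deriv)
  from egf_eqD[OF this, of n] show ?thesis by (simp add: sum_distrib_left mult_ac)
qed

lemma seq_unique:
  assumes "\<And>n. p (Suc n) = (\<Sum>j\<le>n. real (n choose j) * (c * tseq j * p (n - j)))"
    and "\<And>n. q (Suc n) = (\<Sum>j\<le>n. real (n choose j) * (c * tseq j * q (n - j)))"
    and "p 0 = q 0"
  shows "p n = q n"
proof (induction n rule: less_induct)
  case (less n)
  show ?case
  proof (cases n)
    case 0 then show ?thesis using assms(3) by simp
  next
    case (Suc m)
    have "p (Suc m) = (\<Sum>j\<le>m. real (m choose j) * (c * tseq j * p (m - j)))" by (rule assms(1))
    also have "\<dots> = (\<Sum>j\<le>m. real (m choose j) * (c * tseq j * q (m - j)))"
      by (rule sum.cong[OF refl]) (use less.IH Suc in auto)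
    also have "\<dots> = q (Suc m)" by (rule assms(2)[symmetric])
    finally show ?thesis using Suc by simp
  qed
qed

lemma P_eq_R: "Pseq (b / 2) n = Rseq b n"
proof (rule seq_unique[where c = "- b"])
  fix n show "Pseq (b / 2) (Suc n) = (\<Sum>j\<le>n. real (n choose j) * (- b * tseq j * Pseq (b / 2) (n - j)))"
    using P_rec[of "b / 2" n] by simp
next
  fix n show "Rseq b (Suc n) = (\<Sum>j\<le>n. real (n choose j) * (- b * tseq j * Rseq b (n - j)))"
    by (rule R_rec)
next
  show "Pseq (b / 2) 0 = Rseq b 0" by (simp add: Pseq_def Rseq_def sg_def)
qed

theorem theorem1p12:
  fixes n :: nat and \<beta> :: real
  assumes "n \<ge> 1"
  shows "(\<Sum>s\<in>permutations_of_set {1..n+1}.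
            (-1) ^ des s * (\<beta> / 2) ^ (LRmin s + RLmin s - 2)) =
         (if even n
          then (-1) ^ (n div 2) * (\<Sum>s\<in>{s\<in>permutations_of_set {1..n}. down_up s}. \<beta> ^ RLmin s)
          else 0)"
proof -
  have "(\<Sum>s\<in>permutations_of_set {1..n+1}. (-1) ^ des s * (\<beta> / 2) ^ (LRmin s + RLmin s - 2))
      = Pseq (\<beta> / 2) n"
    unfolding Pseq_def by (rule P_comb) auto
  also have "\<dots> = Rseq \<beta> n" by (rule P_eq_R)
  also have "Dseq \<beta> n = (\<Sum>s\<in>{s\<in>permutations_of_set {1..n}. down_up s}. \<beta> ^ RLmin s)"
    using D_comb[of "{1..n}" \<beta>] by (simp add: sum.inter_filter)
  then have "Rseq \<beta> n = (if even n
          then (-1) ^ (n div 2) * (\<Sum>s\<in>{s\<in>permutations_of_set {1..n}. down_up s}. \<beta> ^ RLmin s)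
          else 0)" by (simp add: Rseq_def)
  finally show ?thesis .
qed


end
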